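(* Let $n\ge 1$. For every $\phi\in\mathcal{B}_n$ with $\phi\neq 1$ there exist $i\in\{1,\dots,n-1\}$ and $\epsilon\in\{1,-1\}$ such that $\|\sigma_i^{\epsilon}\phi\|\le\|\phi\|-2$. Consequently $\mathcal{B}_n$ is generated by $\sigma_1,\dots,\sigma_{n-1}$.
   Context: $\Sigma_{0,1,n}$ is the free group with free basis $t_1,\dots,t_n$, and $z_1:=(t_1t_2\cdots t_n)^{-1}$. Notation: $\overline a:=a^{-1}$, $a^b:=b^{-1}ab$, and $[a]$ denotes the conjugacy class of $a$. Automorphisms act on the right and are written as exponents; they compose left to right, i.e. $w^{\phi\psi}=(w^\phi)^\psi$. $\mathcal{B}_n$ is the group of all automorphisms $\phi$ of $\Sigma_{0,1,n}$ such that $z_1^\phi=z_1$ and $\phi$ permutes the set of conjugacy classes $\{[t_1],\dots,[t_n]\}$. For $i\in\{1,\dots,n-1\}$, $\sigma_i\in\mathcal{B}_n$ is the automorphism given by $t_k^{\sigma_i}=t_k$ for $k\notin\{i,i+1\}$, $t_i^{\sigma_i}=t_{i+1}$, and $t_{i+1}^{\sigma_i}=\overline t_{i+1}t_it_{i+1}$. For $w\in\Sigma_{0,1,n}$, $|w|$ is the length of the reduced word in $t_1^{\pm1},\dots,t_n^{\pm1}$ representing $w$. For $\phi\in\mathcal{B}_n$, $\|\phi\|:=\sum_{i=1}^n|t_i^\phi|$. *)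

theory Defs
  imports Main
begin

(* Letters of the free group Sigma_{0,1,n}: (i, True) is t_i, (i, False) is t_i^{-1}.
   Generators are indexed 1..n.  Elements are represented by freely reduced words. *)
type_synonym letter = "nat \<times> bool"
type_synonym word = "letter list"

definition linv :: "letter \<Rightarrow> letter" where
  "linv x = (fst x, \<not> snd x)"

fun red :: "word \<Rightarrow> word" where
  "red [] = []"
| "red (x # xs) = (case red xs of [] \<Rightarrow> [x]
                     | y # ys \<Rightarrow> (if y = linv x then ys else x # y # ys))"

fun reduced :: "word \<Rightarrow> bool" where
  "reduced [] = True"
| "reduced [x] = True"
| "reduced (x # y # ys) = (y \<noteq> linv x \<and> reduced (y # ys))"

definition Sigma :: "nat \<Rightarrow> word set" where
  "Sigma n = {w. reduced w \<and> (\<forall>x\<in>set w. 1 \<le> fst x \<and> fst x \<le> n)}"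

definition winv :: "word \<Rightarrow> word" where
  "winv w = rev (map linv w)"

definition wmul :: "word \<Rightarrow> word \<Rightarrow> word" where
  "wmul u v = red (u @ v)"

definition conjugate :: "nat \<Rightarrow> word \<Rightarrow> word \<Rightarrow> bool" where
  "conjugate n a b = (\<exists>g\<in>Sigma n. b = wmul (winv g) (wmul a g))"

(* an endomorphism is given by the images f i of the generators t_i (i = 1..n);
   its action on a word (automorphisms act on the right: w^phi) *)
definition app :: "(nat \<Rightarrow> word) \<Rightarrow> word \<Rightarrow> word" where
  "app f w = red (concat (map (\<lambda>x. if snd x then f (fst x) else winv (f (fst x))) w))"

definition is_aut :: "nat \<Rightarrow> (nat \<Rightarrow> word) \<Rightarrow> bool" where
  "is_aut n f = ((\<forall>i\<in>{1..n}. f i \<in> Sigma n) \<and> bij_betw (app f) (Sigma n) (Sigma n))"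

definition z1 :: "nat \<Rightarrow> word" where
  "z1 n = winv (map (\<lambda>i. (i, True)) [1..<n+1])"

definition gen :: "nat \<Rightarrow> word" where
  "gen i = [(i, True)]"

definition Bn :: "nat \<Rightarrow> (nat \<Rightarrow> word) set" where
  "Bn n = {f. is_aut n f \<and> app f (z1 n) = z1 n \<and>
              (\<exists>\<pi>. bij_betw \<pi> {1..n} {1..n} \<and> (\<forall>i\<in>{1..n}. conjugate n (f i) (gen (\<pi> i))))}"

(* composition, acting on the right: t^(phi psi) = (t^phi)^psi *)
definition comp_aut :: "(nat \<Rightarrow> word) \<Rightarrow> (nat \<Rightarrow> word) \<Rightarrow> (nat \<Rightarrow> word)" where
  "comp_aut f g = (\<lambda>i. app g (f i))"

definition id_aut :: "nat \<Rightarrow> word" where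
  "id_aut = gen"

definition sigma :: "nat \<Rightarrow> (nat \<Rightarrow> word)" where
  "sigma i = (\<lambda>k. if k = i then [(i+1, True)]
                 else if k = i+1 then [(i+1, False), (i, True), (i+1, True)]
                 else [(k, True)])"

definition sigma_inv :: "nat \<Rightarrow> (nat \<Rightarrow> word)" where
  "sigma_inv i = (\<lambda>k. if k = i then [(i, True), (i+1, True), (i, False)]
                     else if k = i+1 then [(i, True)]
                     else [(k, True)])"

definition sigma_pow :: "nat \<Rightarrow> int \<Rightarrow> (nat \<Rightarrow> word)" where
  "sigma_pow i e = (if e = 1 then sigma i else sigma_inv i)"

definition norm_aut :: "nat \<Rightarrow> (nat \<Rightarrow> word) \<Rightarrow> nat" where
  "norm_aut n f = (\<Sum>i=1..n. length (f i))"

definition aut_eq :: "nat \<Rightarrow> (nat \<Rightarrow> word) \<Rightarrow> (nat \<Rightarrow> word) \<Rightarrow> bool" where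
  "aut_eq n f g = (\<forall>i\<in>{1..n}. f i = g i)"

definition sigma_word :: "(nat \<times> int) list \<Rightarrow> (nat \<Rightarrow> word)" where
  "sigma_word L = foldl (\<lambda>acc p. comp_aut acc (sigma_pow (fst p) (snd p))) id_aut L"

end

theory Submission
  imports Defs
begin


definition cr :: "letter \<Rightarrow> word \<Rightarrow> word" where
  "cr x w = (case w of [] \<Rightarrow> [x] | y # ys \<Rightarrow> (if y = linv x then ys else x # y # ys))"

lemma red_Cons: "red (x # xs) = cr x (red xs)"
  by (simp add: cr_def)

declare red.simps(2)[simp del]

lemma linv_linv[simp]: "linv (linv x) = x" by (simp add: linv_def)
lemma linv_neq[simp]: "linv x \<noteq> x" "x \<noteq> linv x" by (auto simp: linv_def prod_eq_iff)
lemma linv_eq_iff: "(linv x = y) = (x = linv y)" by (auto simp: linv_def)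
lemma linv_inj[simp]: "(linv x = linv y) = (x = y)" by (auto simp: linv_def prod_eq_iff)

lemma red_append: "red (u @ v) = foldr cr u (red v)"
  by (induction u) (auto simp: red_Cons)

lemma reduced_Cons: "reduced (x # w) = (reduced w \<and> (w \<noteq> [] \<longrightarrow> hd w \<noteq> linv x))"
  by (cases w) auto

lemma reduced_cr: "reduced w \<Longrightarrow> reduced (cr x w)"
  by (cases w) (auto simp: cr_def reduced_Cons)

lemma reduced_red[simp]: "reduced (red w)"
  by (induction w) (auto simp: red_Cons reduced_cr)

lemma red_reduced: "reduced w \<Longrightarrow> red w = w"
  by (induction w) (auto simp: red_Cons reduced_Cons cr_def split: list.splits)

lemma red_red[simp]: "red (red w) = red w" by (simp add: red_reduced)

lemma cr_cr: "reduced z \<Longrightarrow> cr x (cr (linv x) z) = z"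
  by (cases z) (auto simp: cr_def reduced_Cons split: list.splits)

lemma foldr_cr_reduced: "reduced w \<Longrightarrow> reduced (foldr cr u w)"
  by (induction u) (auto simp: reduced_cr)

lemma foldr_cr_red: "reduced w \<Longrightarrow> foldr cr (red u) w = foldr cr u w"
proof (induction u)
  case Nil then show ?case by simp
next
  case (Cons x u)
  note IH = Cons.IH[OF Cons.prems] and pr = Cons.prems
  show ?case
  proof (cases "red u")
    case Nil then show ?thesis using IH by (simp add: red_Cons cr_def)
  next
    case (Cons y ys)
    show ?thesis
    proof (cases "y = linv x")
      case True
      have "foldr cr (red (x#u)) w = foldr cr ys w" using Cons True by (simp add: red_Cons cr_def)
      also have "\<dots> = cr x (cr (linv x) (foldr cr ys w))"
        using cr_cr foldr_cr_reduced pr by metis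
      also have "cr (linv x) (foldr cr ys w) = foldr cr (red u) w" using Cons True by simp
      finally show ?thesis using IH by simp
    next
      case False
      then show ?thesis using IH Cons by (simp add: red_Cons cr_def)
    qed
  qed
qed

lemma red_append_red2[simp]: "red (u @ red v) = red (u @ v)"
  by (simp add: red_append)

lemma red_append_red1[simp]: "red (red u @ v) = red (u @ v)"
  by (simp add: red_append foldr_cr_red)

lemma winv_Nil[simp]: "winv [] = []" by (simp add: winv_def)
lemma winv_Cons[simp]: "winv (x # w) = winv w @ [linv x]" by (simp add: winv_def)
lemma winv_append[simp]: "winv (u @ v) = winv v @ winv u" by (simp add: winv_def)
lemma winv_winv[simp]: "winv (winv w) = w" by (simp add: winv_def rev_map comp_def)
lemma length_winv[simp]: "length (winv w) = length w" by (simp add: winv_def)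
lemma winv_inj[simp]: "(winv u = winv v) = (u = v)" by (metis winv_winv)
lemma winv_Nil_iff[simp]: "(winv u = []) = (u = [])" by (simp add: winv_def)

lemma red_cancel0: "red (C @ winv C @ Y) = red Y"
proof (induction C arbitrary: Y)
  case Nil then show ?case by simp
next
  case (Cons x C)
  have "red ((x # C) @ winv (x # C) @ Y) = cr x (red (C @ winv C @ (linv x # Y)))" by (simp add: red_Cons)
  also have "\<dots> = cr x (cr (linv x) (red Y))" using Cons by (simp add: red_Cons)
  also have "\<dots> = red Y" by (simp add: cr_cr)
  finally show ?case .
qed

lemma red_cancel: "red (X @ C @ winv C @ Y) = red (X @ Y)"
  by (metis red_append_red2 red_cancel0)

lemma red_cancel1: "red (X @ x # linv x # Y) = red (X @ Y)"
  using red_cancel[of X "[x]" Y] by simp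

lemma red_cancel2: "red (X @ winv C @ C @ Y) = red (X @ Y)"
  using red_cancel[of X "winv C" Y] by simp

lemma red_Nil[simp]: "red [] = []" by simp

lemma reduced_append: "reduced (u @ v) = (reduced u \<and> reduced v \<and> (u \<noteq> [] \<and> v \<noteq> [] \<longrightarrow> hd v \<noteq> linv (last u)))"
  by (induction u) (auto simp: reduced_Cons)

lemma last_winv: "w \<noteq> [] \<Longrightarrow> last (winv w) = linv (hd w)"
  by (cases w) auto

lemma hd_winv: "w \<noteq> [] \<Longrightarrow> hd (winv w) = linv (last w)"
  by (induction w) auto

lemma reduced_winv: "reduced w \<Longrightarrow> reduced (winv w)"
  by (induction w) (auto simp: reduced_Cons reduced_append last_winv linv_eq_iff)

lemma red_winv: "red (winv w) = winv (red w)"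
proof -
  have "red (winv w @ w @ winv (red w)) = red (winv (red w))"
    using red_cancel2[of "[]" w "winv (red w)"] by simp
  moreover have "red (winv w @ w @ winv (red w)) = red (winv w)"
  proof -
    have "red (w @ winv (red w)) = red (red w @ winv (red w))" by simp
    also have "\<dots> = []" using red_cancel0[of "red w" "[]"] by simp
    finally have "red (w @ winv (red w)) = []" .
    then show ?thesis by (metis append_Nil2 red_append_red2 append_assoc)
  qed
  moreover have "reduced (winv (red w))" by (simp add: reduced_winv)
  ultimately show ?thesis by (metis red_reduced)
qed

lemma length_cr: "length (cr x w) \<le> Suc (length w)"
  by (cases w) (auto simp: cr_def)

lemma length_red: "length (red w) \<le> length w"
  by (induction w) (auto simp: red_Cons intro: order_trans[OF length_cr])

lemma set_cr: "set (cr x w) \<subseteq> insert x (set w)"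
  by (cases w) (auto simp: cr_def)

lemma set_red: "set (red w) \<subseteq> set w"
  by (induction w) (auto simp: red_Cons dest: set_cr[THEN subsetD])

definition img :: "(nat \<Rightarrow> word) \<Rightarrow> letter \<Rightarrow> word" where
  "img f x = (if snd x then f (fst x) else winv (f (fst x)))"

lemma app_img: "app f w = red (concat (map (img f) w))"
  by (simp add: app_def img_def[abs_def])

lemma red_foldr: "foldr cr u [] = red u"
  using red_append[of u "[]"] by simp

lemma img_linv: "img f (linv x) = winv (img f x)"
  by (simp add: img_def linv_def)

lemma app_red: "app f (red w) = app f w"
proof (induction w)
  case Nil then show ?case by simp
next
  case (Cons x w)
  show ?case
  proof (cases "red w")
    case Nil
    then show ?thesis using Cons by (simp add: app_img red_Cons cr_def red_append red_foldr)
  next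
    case (Cons y ys)
    note IH = Cons.IH
    show ?thesis
    proof (cases "y = linv x")
      case True
      have "app f (x # w) = red (img f x @ concat (map (img f) w))" by (simp add: app_img)
      also have "\<dots> = red (img f x @ red (concat (map (img f) w)))" by simp
      also have "red (concat (map (img f) w)) = red (concat (map (img f) (red w)))"
        using IH by (simp add: app_img)
      also have "red (img f x @ \<dots>) = red (img f x @ winv (img f x) @ concat (map (img f) ys))"
        using Cons True by (simp add: img_linv)
      also have "\<dots> = red (concat (map (img f) ys))" using red_cancel[of "[]"] by simp
      finally show ?thesis using Cons True by (simp add: red_Cons cr_def app_img)
    next
      case False
      have "app f (x # w) = red (img f x @ red (concat (map (img f) w)))" by (simp add: app_img)
      also have "red (concat (map (img f) w)) = red (concat (map (img f) (red w)))"
        using IH by (simp add: app_img)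
      finally show ?thesis using Cons False by (simp add: red_Cons cr_def app_img)
    qed
  qed
qed

lemma app_append: "app f (u @ v) = red (app f u @ app f v)"
  by (simp add: app_img)

lemma app_winv: "app f (winv w) = winv (app f w)"
proof -
  have "concat (map (img f) (winv w)) = winv (concat (map (img f) w))"
    by (induction w) (auto simp: img_linv)
  then show ?thesis by (simp add: app_img red_winv)
qed

lemma red_concat_red: "red (concat (map (\<lambda>x. red (h x)) w)) = red (concat (map h w))"
  by (induction w) (auto, metis red_append_red1 red_append_red2)

lemma app_concat: "app g (concat ws) = red (concat (map (app g) ws))"
  by (induction ws) (auto simp: app_img, metis red_append_red1 red_append_red2)

lemma app_comp: "app (comp_aut f g) w = app g (app f w)"
proof -
  have i: "img (comp_aut f g) x = app g (img f x)" for x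
    by (cases "snd x") (simp_all add: img_def comp_aut_def app_winv)
  have "app (comp_aut f g) w = red (concat (map (\<lambda>x. app g (img f x)) w))"
    unfolding app_img[of "comp_aut f g"] i ..
  also have "\<dots> = app g (concat (map (img f) w))"
    by (simp add: app_concat comp_def)
  also have "\<dots> = app g (app f w)" by (simp only: app_img[of f w] app_red)
  finally show ?thesis .
qed

lemma app_gen: "app gen w = red w"
proof -
  have "concat (map (img gen) w) = w" by (induction w) (auto simp: img_def gen_def linv_def)
  then show ?thesis by (simp add: app_img)
qed

lemma app_cong: "(\<And>x. x \<in> set w \<Longrightarrow> f (fst x) = g (fst x)) \<Longrightarrow> app f w = app g w"
proof -
  assume "\<And>x. x \<in> set w \<Longrightarrow> f (fst x) = g (fst x)"
  then have "map (img f) w = map (img g) w" by (intro map_cong) (auto simp: img_def)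
  then show ?thesis by (simp only: app_img)
qed

lemma comp_assoc: "comp_aut (comp_aut f g) h = comp_aut f (comp_aut g h)"
proof
  fix x
  have "comp_aut f (comp_aut g h) x = app (comp_aut g h) (f x)" by (simp only: comp_aut_def)
  also have "\<dots> = app h (app g (f x))" by (rule app_comp)
  finally show "comp_aut (comp_aut f g) h x = comp_aut f (comp_aut g h) x" by (simp add: comp_aut_def)
qed



lemma red_single[simp]: "red [x] = [x]" by (simp add: red_Cons cr_def)

lemma red_mid: "red (g @ red Z @ h) = red (g @ Z @ h)"
  by (metis red_append_red1 red_append_red2)

lemma Sigma_iff: "w \<in> Sigma n \<longleftrightarrow> reduced w \<and> (\<forall>x\<in>set w. fst x \<in> {1..n})"
  by (auto simp: Sigma_def)

lemma set_winv: "set (winv w) = linv ` set w"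
  by (simp add: winv_def)

lemma fst_linv[simp]: "fst (linv x) = fst x" by (simp add: linv_def)

lemma app_Sigma:
  assumes "\<forall>i\<in>{1..n}. f i \<in> Sigma n" "\<forall>x\<in>set w. fst x \<in> {1..n}"
  shows "app f w \<in> Sigma n"
proof -
  have "\<forall>y\<in>set (concat (map (img f) w)). fst y \<in> {1..n}"
  proof
    fix y assume "y \<in> set (concat (map (img f) w))"
    then obtain x where x: "x \<in> set w" "y \<in> set (img f x)" by auto
    have "f (fst x) \<in> Sigma n" using assms x(1) by auto
    then have "\<forall>z\<in>set (f (fst x)). fst z \<in> {1..n}" by (simp add: Sigma_iff)
    then show "fst y \<in> {1..n}" using x(2) by (auto simp: img_def set_winv split: if_splits)
  qed
  then show ?thesis using set_red[of "concat (map (img f) w)"] unfolding app_img Sigma_iff by (simp only: reduced_red) fastforce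
qed

lemma conj_form:
  assumes "a \<in> Sigma n" "conjugate n a (gen p)"
  shows "\<exists>g\<in>Sigma n. a = red (g @ [(p,True)] @ winv g)"
proof -
  obtain g where g: "g \<in> Sigma n" "gen p = red (winv g @ red (a @ g))"
    using assms(2) by (auto simp: conjugate_def wmul_def)
  have "red (g @ gen p @ winv g) = red (g @ winv g @ a @ g @ winv g)"
    using g(2) red_mid[of g "winv g @ red (a @ g)" "winv g"] red_mid[of "g @ winv g" "a @ g" "winv g"] by simp
  also have "\<dots> = red a" using red_cancel[of "[]" g "a @ g @ winv g"] red_cancel[of a g "[]"] by simp
  also have "\<dots> = a" using assms(1) by (simp add: Sigma_iff red_reduced)
  finally show ?thesis using g(1) by (auto simp: gen_def)
qed

lemma conj_intro:
  assumes "H \<in> Sigma n" "a = red (H @ [(q,True)] @ winv H)"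
  shows "conjugate n a (gen q)"
proof -
  have "red (winv H @ red (a @ H)) = red (winv H @ H @ [(q,True)] @ winv H @ H)"
    using assms(2) red_mid[of "winv H" "a @ H" "[]"] red_mid[of "winv H" "H @ [(q,True)] @ winv H" H]
    by simp
  also have "\<dots> = [(q,True)]"
    using red_cancel2[of "[]" H "[(q,True)] @ winv H @ H"] red_cancel2[of "[(q,True)]" H "[]"] by simp
  finally show ?thesis unfolding conjugate_def wmul_def gen_def using assms(1)
    by (intro bexI[of _ H]) auto
qed

lemma conj_shape:
  "reduced A \<Longrightarrow> \<exists>A'. red (winv A @ x # A) = winv A' @ x # A' \<and> reduced (winv A' @ x # A')"
proof (induction A)
  case Nil then show ?case by (intro exI[of _ "[]"]) simp
next
  case (Cons a A1)
  have r1: "reduced A1" using Cons.prems by (simp add: reduced_Cons)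
  show ?case
  proof (cases "a = x \<or> a = linv x")
    case True
    have "red (winv (a # A1) @ x # a # A1) = red (winv A1 @ x # A1)"
    proof (cases "a = x")
      case True
      then show ?thesis using red_cancel1[of "winv A1" "linv x" "x # A1"] by simp
    next
      case False
      then have "a = linv x" using \<open>a = x \<or> a = linv x\<close> by simp
      then show ?thesis using red_cancel1[of "winv A1 @ [x]" x A1] by simp
    qed
    then show ?thesis using Cons.IH[OF r1] by simp
  next
    case False
    have "reduced (winv (a # A1) @ x # a # A1)"
      using Cons.prems False
      by (auto simp: reduced_append reduced_Cons reduced_winv linv_eq_iff last_winv)
    then show ?thesis by (intro exI[of _ "a # A1"]) (simp add: red_reduced)
  qed
qed

lemma Bn_shape:
  assumes "\<phi> \<in> Bn n" "k \<in> {1..n}"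
  shows "\<exists>A p. \<phi> k = winv A @ (p, True) # A \<and> reduced (\<phi> k)"
proof -
  obtain \<pi> where "\<forall>i\<in>{1..n}. conjugate n (\<phi> i) (gen (\<pi> i))" using assms(1) by (auto simp: Bn_def)
  then have c: "conjugate n (\<phi> k) (gen (\<pi> k))" using assms(2) by blast
  have s: "\<phi> k \<in> Sigma n" using assms by (auto simp: Bn_def is_aut_def)
  obtain g where g: "g \<in> Sigma n" "\<phi> k = red (g @ [(\<pi> k,True)] @ winv g)"
    using conj_form[OF s c] by auto
  have "reduced (winv g)" using g(1) by (simp add: Sigma_iff reduced_winv)
  then obtain A' where "red (winv (winv g) @ (\<pi> k, True) # winv g) = winv A' @ (\<pi> k, True) # A'"
    using conj_shape by blast
  then show ?thesis using g s by (auto simp: Sigma_iff)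
qed

definition T :: "nat \<Rightarrow> word" where "T n = map (\<lambda>i. (i,True)) [1..<n+1]"

lemma Bn_prod:
  assumes "\<phi> \<in> Bn n"
  shows "red (concat (map \<phi> [1..<n+1])) = T n"
proof -
  have z: "app \<phi> (z1 n) = z1 n" using assms by (simp add: Bn_def)
  have "app \<phi> (T n) = red (concat (map \<phi> [1..<n+1]))"
    by (simp add: app_img T_def img_def comp_def)
  moreover have "winv (app \<phi> (T n)) = winv (T n)"
    using z by (simp add: z1_def T_def app_winv)
  ultimately show ?thesis by simp
qed

lemma reduced_pos: "(\<forall>x\<in>set w. snd x) \<Longrightarrow> reduced w"
  by (induction w) (auto simp: reduced_Cons linv_def neq_Nil_conv)

lemma T_reduced: "reduced (T n)" by (rule reduced_pos) (auto simp: T_def)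



lemma core:
  fixes W A :: "nat \<Rightarrow> word" and p :: "nat \<Rightarrow> nat" and n :: nat
  assumes n1: "1 \<le> n"
  and shape: "\<And>k. k \<in> {1..n} \<Longrightarrow> W k = winv (A k) @ (p k, True) # A k \<and> reduced (W k)"
  and prod: "red (concat (map W [1..<n+1])) = T n"
  and nm1: "\<And>k. k \<in> {1..<n} \<Longrightarrow> \<not> (length (red (W k @ W (k+1) @ winv (W k))) + 2 \<le> length (W (k+1)))"
  and nm2: "\<And>k. k \<in> {1..<n} \<Longrightarrow> \<not> (length (red (winv (W (k+1)) @ W k @ W (k+1))) + 2 \<le> length (W k))"
  shows "\<forall>k\<in>{1..n}. W k = [(k,True)]"
proof -
  have inv: "Suc m \<le> n \<Longrightarrow> \<exists>Q. red (concat (map W [1..<Suc m + 1])) = Q @ (p (Suc m), True) # A (Suc m)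
     \<and> (\<forall>j\<in>{1..Suc m}. Suc m + length (A (Suc m)) + length (A j) \<le> length (red (concat (map W [1..<Suc m+1]))))" for m
  proof (induction m)
    case 0
    have s: "W 1 = winv (A 1) @ (p 1, True) # A 1" "reduced (W 1)" using shape[of 1] 0 by auto
    show ?case using s by (intro exI[of _ "winv (A 1)"]) (simp add: red_reduced)
  next
    case (Suc m)
    define k where "k = Suc m"
    have kn: "k + 1 \<le> n" "k \<ge> 1" using Suc.prems k_def by auto
    obtain Q where Q: "red (concat (map W [1..<k + 1])) = Q @ (p k, True) # A k"
      and L: "\<forall>j\<in>{1..k}. k + length (A k) + length (A j) \<le> length (red (concat (map W [1..<k+1])))"
      using Suc.IH kn k_def by auto
    define x where "x = (p k, True)"
    define y where "y = (p (k+1), True)"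
    define a where "a = A k"
    define b where "b = A (k+1)"
    have Wk: "W k = winv a @ x # a" "reduced (W k)" using shape[of k] kn by (auto simp: x_def a_def)
    have Wk1: "W (k+1) = winv b @ y # b" "reduced (W (k+1))" using shape[of "k+1"] kn by (auto simp: y_def b_def)
    obtain A' B' C where sfx: "a = A' @ C" "b = B' @ C" "A' = [] \<or> B' = [] \<or> last A' \<noteq> last B'"
      using longest_common_suffix[of a b] by blast
    have P: "concat (map W [1..<k + 1 + 1]) = concat (map W [1..<k + 1]) @ W (k+1)" by simp
    have R: "red (concat (map W [1..<k + 1 + 1])) = red ((Q @ x # A') @ C @ winv C @ (winv B' @ y # b))"
    proof -
      have "red (concat (map W [1..<k + 1 + 1])) = red (red (concat (map W [1..<k + 1])) @ W (k+1))"
        unfolding P by simp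
      then show ?thesis unfolding Q using Wk1 sfx(2) sfx(1)[unfolded a_def] by (simp add: x_def)
    qed
    also have "\<dots> = red (Q @ x # A' @ winv B' @ y # b)" by (simp only: red_cancel) simp
    finally have R: "red (concat (map W [1..<k + 1 + 1])) = red (Q @ x # A' @ winv B' @ y # b)" .
    have kk: "k \<in> {1..<n}" using kn by auto
    have c1: "\<not> (A' = [] \<and> B' \<noteq> [] \<and> last B' = x)"
    proof
      assume h: "A' = [] \<and> B' \<noteq> [] \<and> last B' = x"
      define B'' where "B'' = butlast B'"
      have B': "B' = B'' @ [x]" using h B''_def by (metis append_butlast_last_id)
      have "red (W k @ W (k+1) @ winv (W k)) =
            red ((winv C @ [x]) @ C @ winv C @ (linv x # winv B'' @ y # B'' @ x # C @ winv C @ linv x # C))"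
        using Wk Wk1 sfx h B' by simp
      also have "\<dots> = red (winv C @ x # linv x # (winv B'' @ y # B'' @ x # C @ winv C @ linv x # C))"
        by (simp only: red_cancel) simp
      also have "\<dots> = red ((winv C @ winv B'' @ y # B'' @ [x]) @ C @ winv C @ (linv x # C))"
        by (simp only: red_cancel1) simp
      also have "\<dots> = red ((winv C @ winv B'' @ y # B'') @ x # linv x # C)"
        by (simp only: red_cancel) simp
      also have "\<dots> = red ((winv C @ winv B'' @ y # B'') @ C)"
        by (simp only: red_cancel1)
      finally have "length (red (W k @ W (k+1) @ winv (W k))) \<le> length ((winv C @ winv B'' @ y # B'') @ C)"
        by (metis length_red)
      moreover have "length (W (k+1)) = 2 * length B'' + 2 * length C + 3" using Wk1 sfx B' by simp
      ultimately show False using nm1[OF kk] by simp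
    qed
    have c2: "\<not> (A' \<noteq> [] \<and> B' = [] \<and> last A' = linv y)"
    proof
      assume h: "A' \<noteq> [] \<and> B' = [] \<and> last A' = linv y"
      define A'' where "A'' = butlast A'"
      have A': "A' = A'' @ [linv y]" using h A''_def by (metis append_butlast_last_id)
      have "red (winv (W (k+1)) @ W k @ W (k+1)) =
            red ((winv C @ [linv y]) @ C @ winv C @ (y # winv A'' @ x # A'' @ linv y # C @ winv C @ y # C))"
        using Wk Wk1 sfx h A' by simp
      also have "\<dots> = red (winv C @ linv y # linv (linv y) # (winv A'' @ x # A'' @ linv y # C @ winv C @ y # C))"
        by (simp only: red_cancel) simp
      also have "\<dots> = red ((winv C @ winv A'' @ x # A'' @ [linv y]) @ C @ winv C @ (y # C))"
        by (simp only: red_cancel1) simp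
      also have "\<dots> = red ((winv C @ winv A'' @ x # A'') @ linv y # linv (linv y) # C)"
        by (simp only: red_cancel) simp
      also have "\<dots> = red ((winv C @ winv A'' @ x # A'') @ C)"
        by (simp only: red_cancel1)
      finally have "length (red (winv (W (k+1)) @ W k @ W (k+1))) \<le> length ((winv C @ winv A'' @ x # A'') @ C)"
        by (metis length_red)
      moreover have "length (W k) = 2 * length A'' + 2 * length C + 3" using Wk sfx A' by simp
      ultimately show False using nm2[OF kk] by simp
    qed
    have redR: "reduced (Q @ x # a)" using Q[symmetric] reduced_red x_def a_def by metis
    have "reduced ((Q @ x # A') @ C)" using redR sfx(1) by simp
    then have r1: "reduced (Q @ x # A')" unfolding reduced_append by blast
    have "reduced (winv C @ (winv B' @ y # b))" using Wk1 sfx(2) by simp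
    then have r2: "reduced (winv B' @ y # b)" unfolding reduced_append by blast
    have junc: "hd (winv B' @ y # b) \<noteq> linv (last (Q @ x # A'))"
    proof (cases "B' = []")
      case True
      then show ?thesis
      proof (cases "A' = []")
        case True
        then show ?thesis using \<open>B' = []\<close> by (simp add: x_def y_def linv_def)
      next
        case False
        then have "last A' \<noteq> linv y" using c2 \<open>B' = []\<close> by blast
        then have "y \<noteq> linv (last A')" by (metis linv_linv)
        then show ?thesis using False \<open>B' = []\<close> by simp
      qed
    next
      case False
      then show ?thesis
      proof (cases "A' = []")
        case True
        then have "last B' \<noteq> x" using c1 \<open>B' \<noteq> []\<close> by blast
        then show ?thesis using True False by (simp add: hd_winv)
      next
        case False2: False
        then have "last A' \<noteq> last B'" using sfx(3) False by blast
        then show ?thesis using False False2 by (simp add: hd_winv)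
      qed
    qed
    have red3: "reduced ((Q @ x # A') @ (winv B' @ y # b))"
      using r1 r2 junc by (simp only: reduced_append) simp
    have R': "red (concat (map W [1..<k + 1 + 1])) = (Q @ x # A' @ winv B') @ y # b"
      using R red_reduced[OF red3] by simp
    show ?case
    proof (intro exI conjI)
      show "red (concat (map W [1..<Suc (Suc m) + 1])) = (Q @ x # A' @ winv B') @ (p (Suc (Suc m)), True) # A (Suc (Suc m))"
        using R' by (simp add: k_def y_def b_def)
      have lenL: "length (red (concat (map W [1..<k+1]))) = length Q + 1 + length A' + length C"
        using Q sfx a_def by simp
      have lenL': "length (red (concat (map W [1..<k+1+1]))) = length Q + 2 + length A' + length B' + length b"
        using R' by simp
      show "\<forall>j\<in>{1..Suc (Suc m)}. Suc (Suc m) + length (A (Suc (Suc m))) + length (A j) \<le> length (red (concat (map W [1..<Suc (Suc m) + 1])))"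
      proof
        fix j assume j: "j \<in> {1..Suc (Suc m)}"
        have Lk: "k + length a + length a \<le> length Q + 1 + length A' + length C"
          using L kn lenL a_def by force
        show "Suc (Suc m) + length (A (Suc (Suc m))) + length (A j) \<le> length (red (concat (map W [1..<Suc (Suc m) + 1])))"
        proof (cases "j = k+1")
          case True
          then show ?thesis using Lk lenL' sfx k_def b_def by simp
        next
          case False
          then have "j \<in> {1..k}" using j k_def by auto
          then have "k + length a + length (A j) \<le> length Q + 1 + length A' + length C"
            using L lenL a_def by force
          then show ?thesis using lenL' sfx k_def b_def by simp
        qed
      qed
    qed
  qed
  obtain m where m: "n = Suc m" using n1 by (cases n) auto
  obtain Q where Q: "red (concat (map W [1..<n + 1])) = Q @ (p n, True) # A n"
    and L: "\<forall>j\<in>{1..n}. n + length (A n) + length (A j) \<le> length (red (concat (map W [1..<n+1])))"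
    using inv[of m] m by auto
  have lenT: "length (T n) = n" by (simp add: T_def)
  have A0: "\<forall>j\<in>{1..n}. A j = []" using L prod lenT by fastforce
  have Wj: "\<forall>j\<in>{1..n}. W j = [(p j, True)]" using A0 shape by auto
  have "concat (map W [1..<n+1]) = map (\<lambda>j. (p j, True)) [1..<n+1]"
    using Wj by (induction n) auto
  then have "map (\<lambda>j. (p j, True)) [1..<n+1] = map (\<lambda>j. (j, True)) [1..<n+1]"
    using prod red_reduced[OF reduced_pos, of "map (\<lambda>j. (p j, True)) [1..<n+1]"] by (simp add: T_def)
  then have "\<forall>j\<in>{1..n}. p j = j" by (simp add: map_eq_conv) (auto simp: le_less)
  then show ?thesis using Wj by simp
qed



lemma sum_two:
  fixes f g :: "nat \<Rightarrow> nat"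
  assumes "finite S" "a \<in> S" "b \<in> S" "a \<noteq> b" "\<And>j. j \<in> S \<Longrightarrow> j \<noteq> a \<Longrightarrow> j \<noteq> b \<Longrightarrow> f j = g j"
  shows "sum f S + g a + g b = sum g S + f a + f b"
proof -
  have f: "sum f S = f a + f b + sum f (S - {a} - {b})"
    using assms by (simp add: sum.remove[of S a] sum.remove[of "S - {a}" b])
  have g: "sum g S = g a + g b + sum g (S - {a} - {b})"
    using assms by (simp add: sum.remove[of S a] sum.remove[of "S - {a}" b])
  have "sum f (S - {a} - {b}) = sum g (S - {a} - {b})" using assms(5) by (intro sum.cong) auto
  then show ?thesis using f g by simp
qed

lemma app_single: "app \<phi> [(m, True)] = red (\<phi> m)"
  by (simp add: app_img img_def)

lemma app_three: "app \<phi> [(a, False), (b, True), (c, True)] = red (winv (\<phi> a) @ \<phi> b @ \<phi> c)"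
  by (simp add: app_img img_def)

lemma app_three': "app \<phi> [(a, True), (b, True), (c, False)] = red (\<phi> a @ \<phi> b @ winv (\<phi> c))"
  by (simp add: app_img img_def)

lemma norm_sigma:
  assumes "1 \<le> k" "k + 1 \<le> n" "\<forall>j\<in>{1..n}. reduced (\<phi> j)"
  shows "norm_aut n (comp_aut (sigma k) \<phi>) + length (\<phi> k) = norm_aut n \<phi> + length (red (winv (\<phi> (k+1)) @ \<phi> k @ \<phi> (k+1)))"
proof -
  let ?f = "\<lambda>j. length (comp_aut (sigma k) \<phi> j)" and ?g = "\<lambda>j. length (\<phi> j)"
  have e: "?f j = ?g j" if "j \<in> {1..n}" "j \<noteq> k" "j \<noteq> k+1" for j
    using that assms(3) by (simp add: comp_aut_def sigma_def app_single red_reduced)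
  have "sum ?f {1..n} + ?g k + ?g (k+1) = sum ?g {1..n} + ?f k + ?f (k+1)"
    by (rule sum_two) (use assms e in auto)
  moreover have "?f k = ?g (k+1)" using assms by (simp add: comp_aut_def sigma_def app_single red_reduced)
  moreover have "?f (k+1) = length (red (winv (\<phi> (k+1)) @ \<phi> k @ \<phi> (k+1)))"
    by (simp add: comp_aut_def sigma_def app_three)
  ultimately show ?thesis by (simp add: norm_aut_def)
qed

lemma norm_sigma_inv:
  assumes "1 \<le> k" "k + 1 \<le> n" "\<forall>j\<in>{1..n}. reduced (\<phi> j)"
  shows "norm_aut n (comp_aut (sigma_inv k) \<phi>) + length (\<phi> (k+1)) = norm_aut n \<phi> + length (red (\<phi> k @ \<phi> (k+1) @ winv (\<phi> k)))"
proof -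
  let ?f = "\<lambda>j. length (comp_aut (sigma_inv k) \<phi> j)" and ?g = "\<lambda>j. length (\<phi> j)"
  have e: "?f j = ?g j" if "j \<in> {1..n}" "j \<noteq> k" "j \<noteq> k+1" for j
    using that assms(3) by (simp add: comp_aut_def sigma_inv_def app_single red_reduced)
  have "sum ?f {1..n} + ?g k + ?g (k+1) = sum ?g {1..n} + ?f k + ?f (k+1)"
    by (rule sum_two) (use assms e in auto)
  moreover have "?f (k+1) = ?g k" using assms by (simp add: comp_aut_def sigma_inv_def app_single red_reduced)
  moreover have "?f k = length (red (\<phi> k @ \<phi> (k+1) @ winv (\<phi> k)))"
    by (simp add: comp_aut_def sigma_inv_def app_three')
  ultimately show ?thesis by (simp add: norm_aut_def)
qed

lemma part1:
  assumes n1: "1 \<le> n" and B: "\<phi> \<in> Bn n" and ne: "\<not> aut_eq n \<phi> id_aut"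
  shows "\<exists>i\<in>{1..<n}. \<exists>e\<in>{1::int, -1}. norm_aut n (comp_aut (sigma_pow i e) \<phi>) + 2 \<le> norm_aut n \<phi>"
proof (rule ccontr)
  assume nm: "\<not> ?thesis"
  have "\<forall>k. \<exists>A p. k \<in> {1..n} \<longrightarrow> \<phi> k = winv A @ (p, True) # A \<and> reduced (\<phi> k)"
    using Bn_shape[OF B] by blast
  then obtain A p where sh: "\<And>k. k \<in> {1..n} \<Longrightarrow> \<phi> k = winv (A k) @ (p k, True) # A k \<and> reduced (\<phi> k)"
    by metis
  have red: "\<forall>j\<in>{1..n}. reduced (\<phi> j)" using sh by blast
  have "\<forall>k\<in>{1..n}. \<phi> k = [(k,True)]"
  proof (rule core[OF n1 sh Bn_prod[OF B]])
    fix k assume k: "k \<in> {1..<n}"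
    show "\<not> (length (red (\<phi> k @ \<phi> (k+1) @ winv (\<phi> k))) + 2 \<le> length (\<phi> (k+1)))"
    proof
      assume h: "length (red (\<phi> k @ \<phi> (k+1) @ winv (\<phi> k))) + 2 \<le> length (\<phi> (k+1))"
      have "norm_aut n (comp_aut (sigma_pow k (-1)) \<phi>) + 2 \<le> norm_aut n \<phi>"
        using norm_sigma_inv[of k n \<phi>] k red h by (simp add: sigma_pow_def)
      then show False using nm k by blast
    qed
    show "\<not> (length (red (winv (\<phi> (k+1)) @ \<phi> k @ \<phi> (k+1))) + 2 \<le> length (\<phi> k))"
    proof
      assume h: "length (red (winv (\<phi> (k+1)) @ \<phi> k @ \<phi> (k+1))) + 2 \<le> length (\<phi> k)"
      have "norm_aut n (comp_aut (sigma_pow k 1) \<phi>) + 2 \<le> norm_aut n \<phi>"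
        using norm_sigma[of k n \<phi>] k red h by (simp add: sigma_pow_def)
      then show False using nm k by blast
    qed
  qed
  then show False using ne by (simp add: aut_eq_def id_aut_def gen_def)
qed



lemma z1_T: "z1 n = winv (T n)" by (simp add: z1_def T_def)

lemma letters_Sigma: "w \<in> Sigma n \<Longrightarrow> \<forall>x\<in>set w. fst x \<in> {1..n}" by (simp add: Sigma_iff)

lemma letters_z1: "\<forall>x\<in>set (z1 n). fst x \<in> {1..n}"
  by (auto simp: z1_T T_def set_winv)

lemma app_Sigma_id: "w \<in> Sigma n \<Longrightarrow> app gen w = w"
  by (simp add: app_gen red_reduced Sigma_iff)

lemma Bn_intro:
  assumes vals: "\<forall>i\<in>{1..n}. f i \<in> Sigma n" and gvals: "\<forall>i\<in>{1..n}. g i \<in> Sigma n"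
  and inv1: "\<forall>i\<in>{1..n}. comp_aut f g i = gen i" and inv2: "\<forall>i\<in>{1..n}. comp_aut g f i = gen i"
  and z: "app f (z1 n) = z1 n"
  and pb: "bij_betw \<pi> {1..n} {1..n}"
  and pc: "\<forall>i\<in>{1..n}. \<exists>H\<in>Sigma n. f i = red (H @ [(\<pi> i, True)] @ winv H)"
  shows "f \<in> Bn n"
proof -
  have a1: "app g (app f w) = w" if "w \<in> Sigma n" for w
  proof -
    have "app g (app f w) = app (comp_aut f g) w" by (simp add: app_comp)
    also have "\<dots> = app gen w" using inv1 letters_Sigma[OF that] by (intro app_cong) auto
    finally show ?thesis using app_Sigma_id[OF that] by simp
  qed
  have a2: "app f (app g w) = w" if "w \<in> Sigma n" for w
  proof -
    have "app f (app g w) = app (comp_aut g f) w" by (simp add: app_comp)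
    also have "\<dots> = app gen w" using inv2 letters_Sigma[OF that] by (intro app_cong) auto
    finally show ?thesis using app_Sigma_id[OF that] by simp
  qed
  have "bij_betw (app f) (Sigma n) (Sigma n)"
    by (rule bij_betw_byWitness[where f'="app g"])
       (use a1 a2 app_Sigma[OF vals] app_Sigma[OF gvals] letters_Sigma in auto)
  then have "is_aut n f" using vals by (simp add: is_aut_def)
  moreover have "\<forall>i\<in>{1..n}. conjugate n (f i) (gen (\<pi> i))"
    using pc conj_intro by blast
  ultimately show ?thesis using z pb by (auto simp: Bn_def)
qed

lemma Bn_cong:
  assumes B: "\<psi> \<in> Bn n" and eq: "aut_eq n \<phi> \<psi>"
  shows "\<phi> \<in> Bn n"
proof -
  have ac: "app \<phi> w = app \<psi> w" if "\<forall>x\<in>set w. fst x \<in> {1..n}" for w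
    using eq that by (intro app_cong) (auto simp: aut_eq_def)
  have isa: "is_aut n \<psi>" and z: "app \<psi> (z1 n) = z1 n" using B by (auto simp: Bn_def)
  have "is_aut n \<phi>"
  proof -
    have "bij_betw (app \<phi>) (Sigma n) (Sigma n) = bij_betw (app \<psi>) (Sigma n) (Sigma n)"
      using ac letters_Sigma by (intro bij_betw_cong) auto
    then show ?thesis using isa eq by (auto simp: is_aut_def aut_eq_def)
  qed
  moreover have "app \<phi> (z1 n) = z1 n" using ac letters_z1 z by simp
  moreover obtain \<pi> where "bij_betw \<pi> {1..n} {1..n}" "\<forall>i\<in>{1..n}. conjugate n (\<psi> i) (gen (\<pi> i))"
    using B by (auto simp: Bn_def)
  ultimately show ?thesis using eq by (auto simp: Bn_def aut_eq_def)
qed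

lemma Bn_Sigma: "\<psi> \<in> Bn n \<Longrightarrow> \<forall>i\<in>{1..n}. \<psi> i \<in> Sigma n"
  by (simp add: Bn_def is_aut_def)

lemma Bn_comp:
  assumes F: "f \<in> Bn n" and G: "g \<in> Bn n"
  shows "comp_aut f g \<in> Bn n"
proof -
  have fv: "\<forall>i\<in>{1..n}. f i \<in> Sigma n" and gv: "\<forall>i\<in>{1..n}. g i \<in> Sigma n"
    using F G Bn_Sigma by auto
  have bf: "bij_betw (app f) (Sigma n) (Sigma n)" and bg: "bij_betw (app g) (Sigma n) (Sigma n)"
    using F G by (auto simp: Bn_def is_aut_def)
  have vals: "\<forall>i\<in>{1..n}. comp_aut f g i \<in> Sigma n"
    using fv app_Sigma[OF gv] letters_Sigma unfolding comp_aut_def by blast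
  have "bij_betw (app g \<circ> app f) (Sigma n) (Sigma n)" using bf bg by (rule bij_betw_trans)
  moreover have "app (comp_aut f g) = app g \<circ> app f" by (rule ext) (simp only: app_comp comp_def)
  ultimately have bij: "bij_betw (app (comp_aut f g)) (Sigma n) (Sigma n)" by simp
  have z: "app (comp_aut f g) (z1 n) = z1 n" using F G by (simp add: app_comp Bn_def)
  obtain \<pi>f where pf: "bij_betw \<pi>f {1..n} {1..n}" "\<forall>i\<in>{1..n}. conjugate n (f i) (gen (\<pi>f i))"
    using F by (auto simp: Bn_def)
  obtain \<pi>g where pg: "bij_betw \<pi>g {1..n} {1..n}" "\<forall>i\<in>{1..n}. conjugate n (g i) (gen (\<pi>g i))"
    using G by (auto simp: Bn_def)
  have "conjugate n (comp_aut f g i) (gen (\<pi>g (\<pi>f i)))" if i: "i \<in> {1..n}" for i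
  proof -
    obtain h where h: "h \<in> Sigma n" "f i = red (h @ [(\<pi>f i, True)] @ winv h)"
      using conj_form fv pf(2) i by blast
    have q: "\<pi>f i \<in> {1..n}" using pf(1) i by (auto simp: bij_betw_def)
    obtain h2 where h2: "h2 \<in> Sigma n" "g (\<pi>f i) = red (h2 @ [(\<pi>g (\<pi>f i), True)] @ winv h2)"
      using conj_form gv pg(2) q by blast
    define H1 where "H1 = app g h"
    have H1: "H1 \<in> Sigma n" using app_Sigma[OF gv] letters_Sigma[OF h(1)] H1_def by simp
    define X where "X = H1 @ h2"
    have "comp_aut f g i = app g (h @ [(\<pi>f i, True)] @ winv h)"
      using h(2) by (simp add: comp_aut_def app_red)
    also have "\<dots> = red (H1 @ red (g (\<pi>f i)) @ winv H1)"
    proof -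
      have 1: "app g (h @ [(\<pi>f i, True)] @ winv h) = red (app g h @ app g ([(\<pi>f i, True)] @ winv h))"
        by (rule app_append)
      have 2: "app g ([(\<pi>f i, True)] @ winv h) = red (app g [(\<pi>f i, True)] @ app g (winv h))"
        by (rule app_append)
      show ?thesis unfolding 1 2 by (simp add: app_winv app_single H1_def red_mid)
    qed
    also have "\<dots> = red (X @ [(\<pi>g (\<pi>f i), True)] @ winv X)"
      using h2(2) red_mid[of H1 "h2 @ [(\<pi>g (\<pi>f i), True)] @ winv h2" "winv H1"]
      by (simp add: X_def red_mid)
    also have "\<dots> = red (red X @ [(\<pi>g (\<pi>f i), True)] @ winv (red X))"
      using red_append_red2[of "X @ [(\<pi>g (\<pi>f i), True)]" "winv X"]
      by (simp add: red_winv[symmetric] red_mid)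
    finally have e: "comp_aut f g i = red (red X @ [(\<pi>g (\<pi>f i), True)] @ winv (red X))" .
    have "red X \<in> Sigma n"
      using H1 h2(1) set_red[of X] unfolding Sigma_iff X_def by auto
    then show ?thesis using e conj_intro by blast
  qed
  moreover have "bij_betw (\<pi>g \<circ> \<pi>f) {1..n} {1..n}" using pf(1) pg(1) by (rule bij_betw_trans)
  ultimately show ?thesis using vals bij z by (auto simp: Bn_def is_aut_def)
qed



lemma sigma_inv1: "comp_aut (sigma i) (sigma_inv i) = gen"
  by (rule ext) (simp add: comp_aut_def sigma_def sigma_inv_def app_img img_def red_Cons cr_def linv_def gen_def)

lemma sigma_inv2: "comp_aut (sigma_inv i) (sigma i) = gen"
  by (rule ext) (simp add: comp_aut_def sigma_def sigma_inv_def app_img img_def red_Cons cr_def linv_def gen_def)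

lemma sigma_Sigma: "1 \<le> i \<Longrightarrow> i + 1 \<le> n \<Longrightarrow> \<forall>k\<in>{1..n}. sigma i k \<in> Sigma n"
  by (auto simp: sigma_def Sigma_iff linv_def)

lemma sigma_inv_Sigma: "1 \<le> i \<Longrightarrow> i + 1 \<le> n \<Longrightarrow> \<forall>k\<in>{1..n}. sigma_inv i k \<in> Sigma n"
  by (auto simp: sigma_inv_def Sigma_iff linv_def)

lemma concat_map_single: "(\<forall>j\<in>set xs. f j = [(j,True)]) \<Longrightarrow> concat (map f xs) = map (\<lambda>j. (j,True)) xs"
  by (induction xs) auto

lemma T_split: "1 \<le> i \<Longrightarrow> i + 1 \<le> n \<Longrightarrow>
  T n = map (\<lambda>j. (j,True)) [1..<i] @ [(i,True),(i+1,True)] @ map (\<lambda>j. (j,True)) [i+2..<n+1]"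
proof -
  assume a: "1 \<le> i" "i + 1 \<le> n"
  have "[1..<n+1] = [1..<i] @ [i..<n+1]" using a upt_add_eq_append[of 1 i "n+1-i"] by simp
  also have "[i..<n+1] = i # (i+1) # [i+2..<n+1]" using a by (simp add: upt_conv_Cons)
  finally show ?thesis by (simp add: T_def)
qed

lemma app_T:
  assumes a: "1 \<le> i" "i + 1 \<le> n" and f: "\<And>j. j \<noteq> i \<Longrightarrow> j \<noteq> i + 1 \<Longrightarrow> f j = [(j,True)]"
  shows "app f (T n) = red (map (\<lambda>j. (j,True)) [1..<i] @ f i @ f (i+1) @ map (\<lambda>j. (j,True)) [i+2..<n+1])"
proof -
  have c: "concat (map (img f) (map (\<lambda>j. (j,True)) xs)) = concat (map f xs)" for xs
    by (induction xs) (auto simp: img_def)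
  have 1: "concat (map f [1..<i]) = map (\<lambda>j. (j,True)) [1..<i]"
    by (rule concat_map_single) (auto simp: f)
  have 2: "concat (map f [i+2..<n+1]) = map (\<lambda>j. (j,True)) [i+2..<n+1]"
    by (rule concat_map_single) (auto simp: f)
  show ?thesis unfolding app_img T_split[OF a] map_append concat_append c 1 2
    by (simp add: img_def)
qed

lemma sigma_z1: assumes a: "1 \<le> i" "i + 1 \<le> n" shows "app (sigma i) (z1 n) = z1 n"
proof -
  let ?P = "map (\<lambda>j. (j,True)) [1..<i]" and ?S = "map (\<lambda>j. (j,True)) [i+2..<n+1]"
  have "app (sigma i) (T n) = red (?P @ [(i+1,True)] @ [(i+1,False),(i,True),(i+1,True)] @ ?S)"
    using app_T[OF a, of "sigma i"] by (simp add: sigma_def)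
  also have "\<dots> = red (?P @ (i,True) # (i+1,True) # ?S)"
    using red_cancel1[of ?P "(i+1,True)" "(i,True) # (i+1,True) # ?S"] by (simp add: linv_def)
  also have "\<dots> = T n" using T_split[OF a] T_reduced[of n] by (simp add: red_reduced)
  finally show ?thesis by (simp add: z1_T app_winv)
qed

lemma sigma_inv_z1: assumes a: "1 \<le> i" "i + 1 \<le> n" shows "app (sigma_inv i) (z1 n) = z1 n"
proof -
  let ?P = "map (\<lambda>j. (j,True)) [1..<i]" and ?S = "map (\<lambda>j. (j,True)) [i+2..<n+1]"
  have "app (sigma_inv i) (T n) = red (?P @ [(i,True),(i+1,True),(i,False)] @ [(i,True)] @ ?S)"
    using app_T[OF a, of "sigma_inv i"] by (simp add: sigma_inv_def)
  also have "\<dots> = red ((?P @ [(i,True),(i+1,True)]) @ ?S)"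
    using red_cancel1[of "?P @ [(i,True),(i+1,True)]" "(i,False)" ?S] by (simp add: linv_def)
  also have "\<dots> = T n" using T_split[OF a] T_reduced[of n] by (simp add: red_reduced)
  finally show ?thesis by (simp add: z1_T app_winv)
qed

definition swp :: "nat \<Rightarrow> nat \<Rightarrow> nat" where
  "swp i k = (if k = i then i + 1 else if k = i + 1 then i else k)"

lemma swp_bij: "1 \<le> i \<Longrightarrow> i + 1 \<le> n \<Longrightarrow> bij_betw (swp i) {1..n} {1..n}"
  by (rule bij_betw_byWitness[where f'="swp i"]) (auto simp: swp_def)

lemma sigma_Bn: assumes a: "1 \<le> i" "i + 1 \<le> n" shows "sigma i \<in> Bn n"
proof (rule Bn_intro[OF sigma_Sigma[OF a] sigma_inv_Sigma[OF a] _ _ sigma_z1[OF a] swp_bij[OF a]])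
  show "\<forall>k\<in>{1..n}. comp_aut (sigma i) (sigma_inv i) k = gen k" by (simp add: sigma_inv1)
  show "\<forall>k\<in>{1..n}. comp_aut (sigma_inv i) (sigma i) k = gen k" by (simp add: sigma_inv2)
  show "\<forall>k\<in>{1..n}. \<exists>H\<in>Sigma n. sigma i k = red (H @ [(swp i k, True)] @ winv H)"
  proof
    fix k assume k: "k \<in> {1..n}"
    show "\<exists>H\<in>Sigma n. sigma i k = red (H @ [(swp i k, True)] @ winv H)"
    proof (cases "k = i + 1")
      case True
      then show ?thesis using a
        by (intro bexI[of _ "[(i+1,False)]"]) (auto simp: sigma_def swp_def Sigma_iff red_Cons cr_def linv_def)
    next
      case False
      then show ?thesis
        by (intro bexI[of _ "[]"]) (auto simp: sigma_def swp_def Sigma_iff)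
    qed
  qed
qed

lemma sigma_inv_Bn: assumes a: "1 \<le> i" "i + 1 \<le> n" shows "sigma_inv i \<in> Bn n"
proof (rule Bn_intro[OF sigma_inv_Sigma[OF a] sigma_Sigma[OF a] _ _ sigma_inv_z1[OF a] swp_bij[OF a]])
  show "\<forall>k\<in>{1..n}. comp_aut (sigma_inv i) (sigma i) k = gen k" by (simp add: sigma_inv2)
  show "\<forall>k\<in>{1..n}. comp_aut (sigma i) (sigma_inv i) k = gen k" by (simp add: sigma_inv1)
  show "\<forall>k\<in>{1..n}. \<exists>H\<in>Sigma n. sigma_inv i k = red (H @ [(swp i k, True)] @ winv H)"
  proof
    fix k assume k: "k \<in> {1..n}"
    show "\<exists>H\<in>Sigma n. sigma_inv i k = red (H @ [(swp i k, True)] @ winv H)"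
    proof (cases "k = i")
      case True
      then show ?thesis using a
        by (intro bexI[of _ "[(i,True)]"]) (auto simp: sigma_inv_def swp_def Sigma_iff red_Cons cr_def linv_def)
    next
      case False
      then show ?thesis
        by (intro bexI[of _ "[]"]) (auto simp: sigma_inv_def swp_def Sigma_iff)
    qed
  qed
qed

lemma gen_Sigma: "\<forall>k\<in>{1..n}. gen k \<in> Sigma n" by (auto simp: gen_def Sigma_iff)

lemma id_Bn: "id_aut \<in> Bn n"
  unfolding id_aut_def
proof (rule Bn_intro[OF gen_Sigma gen_Sigma _ _ _ bij_betw_id])
  have cg: "comp_aut gen gen = gen" by (rule ext) (simp add: comp_aut_def app_gen gen_def)
  show "\<forall>i\<in>{1..n}. comp_aut gen gen i = gen i" by (simp add: cg)
  then show "\<forall>i\<in>{1..n}. comp_aut gen gen i = gen i" .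
  show "app gen (z1 n) = z1 n" by (simp add: app_gen z1_T red_winv T_reduced red_reduced)
  show "\<forall>i\<in>{1..n}. \<exists>H\<in>Sigma n. gen i = red (H @ [(id i, True)] @ winv H)"
    by (auto simp: gen_def Sigma_iff intro: bexI[of _ "[]"])
qed

lemma sigma_pow_Bn: "1 \<le> i \<Longrightarrow> i + 1 \<le> n \<Longrightarrow> sigma_pow i e \<in> Bn n"
  by (simp add: sigma_pow_def sigma_Bn sigma_inv_Bn)

lemma sigma_pow_reduced: "reduced (sigma_pow i e k)"
  by (auto simp: sigma_pow_def sigma_def sigma_inv_def linv_def)

lemma comp_gen_right: "(\<And>k. reduced (f k)) \<Longrightarrow> comp_aut f id_aut = f"
  by (rule ext) (simp add: comp_aut_def id_aut_def app_gen red_reduced)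

lemma comp_gen_left: "(\<And>k. reduced (f k)) \<Longrightarrow> comp_aut id_aut f = f"
  by (rule ext) (simp add: comp_aut_def id_aut_def gen_def app_single red_reduced)

lemma foldl_sw: "\<forall>k. reduced (acc k) \<Longrightarrow>
  foldl (\<lambda>acc p. comp_aut acc (sigma_pow (fst p) (snd p))) acc L = comp_aut acc (sigma_word L)"
proof (induction L arbitrary: acc)
  case Nil then show ?case by (simp add: sigma_word_def comp_gen_right)
next
  case (Cons p L)
  have r: "\<forall>k. reduced (comp_aut acc (sigma_pow (fst p) (snd p)) k)" by (simp add: comp_aut_def app_img)
  have r2: "\<forall>k. reduced (sigma_pow (fst p) (snd p) k)" by (simp add: sigma_pow_reduced)
  have "sigma_word (p # L) = foldl (\<lambda>acc p. comp_aut acc (sigma_pow (fst p) (snd p))) (sigma_pow (fst p) (snd p)) L"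
    by (simp add: sigma_word_def comp_gen_left sigma_pow_reduced)
  also have "\<dots> = comp_aut (sigma_pow (fst p) (snd p)) (sigma_word L)" using Cons.IH[OF r2] .
  finally show ?case using Cons.IH[OF r] by (simp add: comp_assoc)
qed

lemma sigma_word_Cons: "sigma_word (p # L) = comp_aut (sigma_pow (fst p) (snd p)) (sigma_word L)"
proof -
  have "sigma_word (p # L) = foldl (\<lambda>acc p. comp_aut acc (sigma_pow (fst p) (snd p))) (sigma_pow (fst p) (snd p)) L"
    by (simp add: sigma_word_def comp_gen_left sigma_pow_reduced)
  also have "\<dots> = comp_aut (sigma_pow (fst p) (snd p)) (sigma_word L)"
    by (rule foldl_sw) (simp add: sigma_pow_reduced)
  finally show ?thesis .
qed

lemma sigma_word_Bn: "(\<forall>p\<in>set L. fst p \<in> {1..<n} \<and> snd p \<in> {1, -1}) \<Longrightarrow> sigma_word L \<in> Bn n"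
proof (induction L)
  case Nil then show ?case by (simp add: sigma_word_def id_Bn)
next
  case (Cons p L)
  then show ?case by (auto simp: sigma_word_Cons intro!: Bn_comp sigma_pow_Bn)
qed



lemma sigma_pow_inv: "e \<in> {1::int, -1} \<Longrightarrow> comp_aut (sigma_pow i (-e)) (sigma_pow i e) = gen"
  by (auto simp: sigma_pow_def sigma_inv1 sigma_inv2)

lemma part2_fwd:
  assumes n1: "1 \<le> n"
  shows "\<phi> \<in> Bn n \<Longrightarrow> \<exists>L. (\<forall>p\<in>set L. fst p \<in> {1..<n} \<and> snd p \<in> {1, -1}) \<and> aut_eq n \<phi> (sigma_word L)"
proof (induction "norm_aut n \<phi>" arbitrary: \<phi> rule: less_induct)
  case less
  show ?case
  proof (cases "aut_eq n \<phi> id_aut")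
    case True
    then show ?thesis by (intro exI[of _ "[]"]) (simp add: sigma_word_def)
  next
    case False
    obtain i e where ie: "i \<in> {1..<n}" "e \<in> {1::int, -1}"
      and dec: "norm_aut n (comp_aut (sigma_pow i e) \<phi>) + 2 \<le> norm_aut n \<phi>"
      using part1[OF n1 less.prems False] by blast
    define \<psi> where "\<psi> = comp_aut (sigma_pow i e) \<phi>"
    have a: "1 \<le> i" "i + 1 \<le> n" using ie by auto
    have pB: "\<psi> \<in> Bn n" unfolding \<psi>_def by (rule Bn_comp[OF sigma_pow_Bn[OF a] less.prems])
    obtain L where L: "\<forall>p\<in>set L. fst p \<in> {1..<n} \<and> snd p \<in> {1, -1}" "aut_eq n \<psi> (sigma_word L)"
      using less.hyps[of \<psi>] dec pB \<psi>_def by fastforce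
    have ve: "-e \<in> {1::int, -1}" using ie by auto
    have vs: "\<forall>k\<in>{1..n}. sigma_pow i (-e) k \<in> Sigma n" using sigma_pow_Bn[OF a] Bn_Sigma by blast
    have red\<phi>: "\<forall>k\<in>{1..n}. \<phi> k \<in> Sigma n" using Bn_Sigma less.prems by blast
    have "aut_eq n \<phi> (sigma_word ((i, -e) # L))"
      unfolding aut_eq_def
    proof
      fix k assume k: "k \<in> {1..n}"
      have "sigma_word ((i, -e) # L) k = app (sigma_word L) (sigma_pow i (-e) k)"
        by (simp add: sigma_word_Cons comp_aut_def)
      also have "\<dots> = app \<psi> (sigma_pow i (-e) k)"
        using L(2) letters_Sigma[of "sigma_pow i (-e) k" n] vs k
        by (intro app_cong) (auto simp: aut_eq_def)
      also have "\<dots> = app \<phi> (app (sigma_pow i e) (sigma_pow i (-e) k))"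
        by (simp add: \<psi>_def app_comp)
      also have "app (sigma_pow i e) (sigma_pow i (-e) k) = gen k"
        using sigma_pow_inv[OF ie(2), of i] by (metis comp_aut_def)
      also have "app \<phi> (gen k) = \<phi> k"
        using red\<phi> k by (simp add: gen_def app_single red_reduced Sigma_iff)
      finally show "\<phi> k = sigma_word ((i, -e) # L) k" by simp
    qed
    then show ?thesis using L(1) ie ve by (intro exI[of _ "(i, -e) # L"]) auto
  qed
qed

theorem proposition3p3:
  fixes n :: nat
  assumes "n \<ge> 1"
  shows "(\<forall>\<phi>\<in>Bn n. \<not> aut_eq n \<phi> id_aut \<longrightarrow>
            (\<exists>i\<in>{1..<n}. \<exists>e\<in>{1::int, -1}.
               norm_aut n (comp_aut (sigma_pow i e) \<phi>) + 2 \<le> norm_aut n \<phi>))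
       \<and> (\<forall>\<phi>. \<phi> \<in> Bn n \<longleftrightarrow>
            (\<exists>L. (\<forall>p\<in>set L. fst p \<in> {1..<n} \<and> snd p \<in> {1, -1}) \<and> aut_eq n \<phi> (sigma_word L)))"
proof (intro conjI ballI impI allI iffI)
  fix \<phi> assume "\<phi> \<in> Bn n" "\<not> aut_eq n \<phi> id_aut"
  then show "\<exists>i\<in>{1..<n}. \<exists>e\<in>{1::int, -1}. norm_aut n (comp_aut (sigma_pow i e) \<phi>) + 2 \<le> norm_aut n \<phi>"
    using part1 assms by blast
next
  fix \<phi> :: "nat \<Rightarrow> word" assume "\<phi> \<in> Bn n"
  then show "\<exists>L. (\<forall>p\<in>set L. fst p \<in> {1..<n} \<and> snd p \<in> {1, -1}) \<and> aut_eq n \<phi> (sigma_word L)"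
    using part2_fwd assms by blast
next
  fix \<phi> :: "nat \<Rightarrow> word"
  assume "\<exists>L. (\<forall>p\<in>set L. fst p \<in> {1..<n} \<and> snd p \<in> {1, -1}) \<and> aut_eq n \<phi> (sigma_word L)"
  then obtain L where "\<forall>p\<in>set L. fst p \<in> {1..<n} \<and> snd p \<in> {1, -1}" "aut_eq n \<phi> (sigma_word L)" by blast
  then show "\<phi> \<in> Bn n" using Bn_cong sigma_word_Bn by blast
qed

end
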